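(* Let $n,d\in\mathbb{N}$, let $f_{1},\ldots,f_{d}:\{0,1\}^n\to[0,1]$ be functions, $\epsilon\in(0,\infty)$ and $\delta\in(0,\frac{1}{2})$. There is a randomized algorithm that, given sample access to each $f_{i}$, $(d+1)$-pseudodeterministically $(\epsilon,\delta)$-approximates $\langle\mathbb{E}(f_{i})\rangle_{i=1}^{d}$ relative to the $d_{max}$ metric using $O\left(\frac{(d+1)^{2}}{\epsilon^{2}}\cdot\log\left(\frac{d}{\delta}\right)\right)$ samples.
   Context: $\mathbb{E}(f_i)$ is the average of $f_i$ over uniformly random $x\in\{0,1\}^n$. Sample access means the algorithm may draw uniformly random points $x\in\{0,1\}^n$ and learn the values $f_i(x)$; each such point is one sample. $d_{max}(\vec{x},\vec{y})=\max_i|x_i-y_i|$ on $\mathbb{R}^d$. An algorithm $(d+1)$-pseudodeterministically $(\epsilon,\delta)$-approximates a vector $\vec{v}\in\mathbb{R}^d$ if there is a set $S$ of at most $d+1$ vectors (depending only on the instance, not on the algorithm's randomness) such that with probability at least $1-\delta$ the output $\vec{\alpha}$ lies in $S$ and satisfies $d_{max}(\vec{\alpha},\vec{v})\le\epsilon$. *)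

theory Defs
  imports "HOL-Probability.Probability"
begin

definition cube :: "nat \<Rightarrow> bool list set" where
  "cube n = {x. length x = n}"

definition cube_mean :: "nat \<Rightarrow> (bool list \<Rightarrow> real) \<Rightarrow> real" where
  "cube_mean n g = (\<Sum>x\<in>cube n. g x) / 2 ^ n"

definition d_max :: "real list \<Rightarrow> real list \<Rightarrow> real" where
  "d_max xs ys = Max (insert 0 {\<bar>xs ! i - ys ! i\<bar> | i. i < length xs})"

definition samples_pmf :: "nat \<Rightarrow> nat \<Rightarrow> bool list list pmf" where
  "samples_pmf n m = pmf_of_set {xs. length xs = m \<and> (\<forall>x\<in>set xs. x \<in> cube n)}"

text \<open>A randomized sampling algorithm is modelled as a map from the observed
  samples (each a point x together with the values f_1(x),...,f_d(x)) to a
  distribution over outputs (its internal randomness).\<close>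
definition run_alg ::
  "nat \<Rightarrow> nat \<Rightarrow> nat \<Rightarrow> ((bool list \<times> real list) list \<Rightarrow> real list pmf)
    \<Rightarrow> (nat \<Rightarrow> bool list \<Rightarrow> real) \<Rightarrow> real list pmf" where
  "run_alg n d m A f =
     bind_pmf (samples_pmf n m) (\<lambda>xs. A (map (\<lambda>x. (x, map (\<lambda>i. f i x) [0..<d])) xs))"

definition pseudodet_approx ::
  "nat \<Rightarrow> real \<Rightarrow> real \<Rightarrow> real list pmf \<Rightarrow> real list \<Rightarrow> bool" where
  "pseudodet_approx k eps delta P v \<longleftrightarrow>
     (\<exists>S. finite S \<and> card S \<le> k \<and>
        measure_pmf.prob P {a. a \<in> S \<and> length a = length v \<and> d_max a v \<le> eps} \<ge> 1 - delta)"

end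

theory Submission imports Defs begin

definition bnd :: "real \<Rightarrow> nat \<Rightarrow> nat \<Rightarrow> int \<Rightarrow> real" where
  "bnd L D k z = real k * L / (real D + 1) + real_of_int z * L"

definition rnd :: "real \<Rightarrow> nat \<Rightarrow> nat \<Rightarrow> real \<Rightarrow> real" where
  "rnd L D k x = real k * L / (real D + 1) + L * real_of_int \<lfloor>(x - real k * L / (real D + 1)) / L\<rfloor>"

definition good :: "real \<Rightarrow> real \<Rightarrow> nat \<Rightarrow> nat \<Rightarrow> (nat \<Rightarrow> real) \<Rightarrow> bool" where
  "good \<eta> L D k u \<longleftrightarrow> (\<forall>i<D. \<forall>z. 2 * \<eta> \<le> \<bar>u i - bnd L D k z\<bar>)"

definition Out :: "real \<Rightarrow> real \<Rightarrow> nat \<Rightarrow> (nat \<Rightarrow> real) \<Rightarrow> real list" where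
  "Out \<eta> L D u = (if \<exists>k\<le>D. good \<eta> L D k u
      then map (\<lambda>i. rnd L D (LEAST k. k \<le> D \<and> good \<eta> L D k u) (u i)) [0..<D] else [])"

lemma rnd_close:
  assumes "L > 0"
  shows "rnd L D k x \<le> x" "x - L < rnd L D k x"
proof -
  define s where "s = real k * L / (real D + 1)"
  have r: "rnd L D k x = s + L * real_of_int \<lfloor>(x - s) / L\<rfloor>" by (simp add: rnd_def s_def)
  have "real_of_int \<lfloor>(x - s) / L\<rfloor> \<le> (x - s)/L" by linarith
  then have "L * real_of_int \<lfloor>(x - s) / L\<rfloor> \<le> L * ((x - s)/L)" using assms by (intro mult_left_mono) auto
  then have "L * real_of_int \<lfloor>(x - s) / L\<rfloor> \<le> x - s" using assms by simp
  then show "rnd L D k x \<le> x" using r by simp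
  have "(x - s)/L < real_of_int \<lfloor>(x - s) / L\<rfloor> + 1" by linarith
  then have "L * ((x - s)/L) < L * (real_of_int \<lfloor>(x - s) / L\<rfloor> + 1)" using assms by (intro mult_strict_left_mono) auto
  moreover have "L * ((x - s)/L) = x - s" using assms by simp
  ultimately have "x - s < L * real_of_int \<lfloor>(x - s) / L\<rfloor> + L" by (simp add: algebra_simps)
  then show "x - L < rnd L D k x" using r by simp
qed

lemma rnd_eq:
  assumes L: "L > 0" and e: "\<eta> > 0" and uv: "\<bar>u - v\<bar> \<le> \<eta>"
    and g: "\<forall>z. 2 * \<eta> \<le> \<bar>u - bnd L D k z\<bar>"
  shows "rnd L D k u = rnd L D k v"
proof -
  define s where "s = real k * L / (real D + 1)"
  have b: "bnd L D k z = s + real_of_int z * L" for z by (simp add: bnd_def s_def)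
  define a where "a = \<lfloor>(u - s) / L\<rfloor>"
  define c where "c = \<lfloor>(v - s) / L\<rfloor>"
  have a1: "s + real_of_int a * L \<le> u" "u < s + real_of_int (a+1) * L"
  proof -
    have "real_of_int a \<le> (u - s)/L" "(u - s)/L < real_of_int a + 1" unfolding a_def by linarith+
    then show "s + real_of_int a * L \<le> u" "u < s + real_of_int (a+1) * L" using L by (simp_all add: field_simps)
  qed
  have c1: "s + real_of_int c * L \<le> v" "v < s + real_of_int (c+1) * L"
  proof -
    have "real_of_int c \<le> (v - s)/L" "(v - s)/L < real_of_int c + 1" unfolding c_def by linarith+
    then show "s + real_of_int c * L \<le> v" "v < s + real_of_int (c+1) * L" using L by (simp_all add: field_simps)
  qed
  have "a = c"
  proof (rule ccontr)
    assume "a \<noteq> c"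
    then consider "a < c" | "c < a" by linarith
    then show False
    proof cases
      case 1
      then have "a + 1 \<le> c" by simp
      then have "real_of_int (a+1) * L \<le> real_of_int c * L" using L by (intro mult_right_mono) (simp_all del: of_int_add)
      then have "\<bar>u - bnd L D k (a+1)\<bar> \<le> \<eta>" using a1 c1 uv b[of "a+1"] by auto
      then show False using g[rule_format, of "a+1"] e by linarith
    next
      case 2
      then have "c + 1 \<le> a" by simp
      then have "real_of_int (c+1) * L \<le> real_of_int a * L" using L by (intro mult_right_mono) (simp_all del: of_int_add)
      then have "\<bar>u - bnd L D k a\<bar> \<le> \<eta>" using a1 c1 uv b[of "a"] by auto
      then show False using g[rule_format, of "a"] e by linarith
    qed
  qed
  then show ?thesis by (simp add: rnd_def s_def a_def c_def)
qed

lemma bnd_unique: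
  assumes L: "L > 0" and "k \<le> D" "k' \<le> D"
    and h: "\<bar>bnd L D k z - bnd L D k' z'\<bar> < L / (real D + 1)"
  shows "k = k'"
proof -
  define N where "N = (int k - int k') + (z - z') * (int D + 1)"
  have RN: "real_of_int N = real k - real k' + (real_of_int z - real_of_int z') * (real D + 1)" unfolding N_def by simp
  have D1: "real D + 1 \<noteq> 0" by simp
  have aux: "c \<noteq> 0 \<Longrightarrow> a * L / c + b * L - (a' * L / c + b' * L) = L / c * (a - a' + (b - b') * c)"
    for a a' b b' c :: real by (simp add: field_simps)
  have eqN: "bnd L D k z - bnd L D k' z' = L / (real D + 1) * real_of_int N"
    unfolding bnd_def RN by (rule aux[OF D1])
  have cpos: "L / (real D + 1) > 0" using L by simp
  have "\<bar>L / (real D + 1) * real_of_int N\<bar> < L / (real D + 1)" using h eqN by simp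
  then have "L / (real D + 1) * \<bar>real_of_int N\<bar> < L / (real D + 1) * 1"
    using cpos by (simp only: abs_mult abs_of_pos mult_1_right)
  then have "\<bar>real_of_int N\<bar> < 1" using cpos mult_less_cancel_left_pos by blast
  then have N0: "N = 0" by linarith
  show ?thesis
  proof (cases "z = z'")
    case True then show ?thesis using N0 N_def by simp
  next
    case False
    then have "\<bar>z - z'\<bar> \<ge> 1" by linarith
    then have "\<bar>(z - z') * (int D + 1)\<bar> \<ge> int D + 1" by (simp add: abs_mult)
    moreover have "\<bar>int k - int k'\<bar> \<le> int D" using assms by linarith
    ultimately show ?thesis using N0 N_def by linarith
  qed
qed

lemma Out_in:
  assumes L: "L > 0" and e: "\<eta> > 0" and small: "6 * \<eta> * (real D + 1) \<le> L"
    and uv: "\<forall>i<D. \<bar>u i - v i\<bar> \<le> \<eta>"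
  shows "Out \<eta> L D u \<in> (\<lambda>k. map (\<lambda>i. rnd L D k (v i)) [0..<D]) ` {..D}"
proof -
  define bad where "bad i = {k. k \<le> D \<and> (\<exists>z. \<bar>v i - bnd L D k z\<bar> < 3 * \<eta>)}" for i
  have fin: "finite (bad i)" for i by (rule finite_subset[of _ "{..D}"]) (auto simp: bad_def)
  have c1: "card (bad i) \<le> 1" for i
  proof -
    have "\<forall>x\<in>bad i. \<forall>y\<in>bad i. x = y"
    proof (intro ballI)
      fix x y assume "x \<in> bad i" "y \<in> bad i"
      then obtain z z' where "x \<le> D" "y \<le> D" "\<bar>v i - bnd L D x z\<bar> < 3 * \<eta>" "\<bar>v i - bnd L D y z'\<bar> < 3 * \<eta>"
        by (auto simp: bad_def)
      moreover have "6 * \<eta> \<le> L / (real D + 1)" using small by (simp add: field_simps)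
      ultimately show "x = y" using bnd_unique[OF L, of x D y z z'] by linarith
    qed
    then show ?thesis using card_le_Suc0_iff_eq[OF fin] by simp
  qed
  have "card (\<Union>i<D. bad i) \<le> (\<Sum>i<D. card (bad i))" by (rule card_UN_le) simp
  also have "\<dots> \<le> (\<Sum>i<D. 1)" by (intro sum_mono c1)
  finally have cU: "card (\<Union>i<D. bad i) \<le> D" by simp
  have "{..D} - (\<Union>i<D. bad i) \<noteq> {}"
  proof
    assume "{..D} - (\<Union>i<D. bad i) = {}"
    then have "{..D} \<subseteq> (\<Union>i<D. bad i)" by blast
    then have "card {..D} \<le> card (\<Union>i<D. bad i)" by (intro card_mono) (auto simp: fin)
    with cU show False by simp
  qed
  then obtain k where k: "k \<le> D" "\<forall>i<D. k \<notin> bad i" by blast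
  have gk: "good \<eta> L D k u" unfolding good_def
  proof (intro allI impI)
    fix i z assume i: "i < D"
    then have "\<bar>v i - bnd L D k z\<bar> \<ge> 3 * \<eta>" using k by (auto simp: bad_def not_less)
    moreover have "\<bar>u i - v i\<bar> \<le> \<eta>" using uv i by auto
    ultimately show "2 * \<eta> \<le> \<bar>u i - bnd L D k z\<bar>" by linarith
  qed
  define k0 where "k0 = (LEAST k. k \<le> D \<and> good \<eta> L D k u)"
  have k0: "k0 \<le> D \<and> good \<eta> L D k0 u" unfolding k0_def by (rule LeastI[of _ k]) (use k gk in auto)
  have ex: "\<exists>k\<le>D. good \<eta> L D k u" using k gk by auto
  have "Out \<eta> L D u = map (\<lambda>i. rnd L D k0 (u i)) [0..<D]"
    unfolding Out_def k0_def using ex by simp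
  also have "\<dots> = map (\<lambda>i. rnd L D k0 (v i)) [0..<D]"
  proof (rule map_cong[OF refl])
    fix i assume "i \<in> set [0..<D]"
    then have i: "i < D" by simp
    show "rnd L D k0 (u i) = rnd L D k0 (v i)"
      by (rule rnd_eq[OF L e]) (use uv i k0 in \<open>auto simp: good_def\<close>)
  qed
  finally show ?thesis using k0 by auto
qed

lemma cube_finite: "finite (cube n)"
  unfolding cube_def using finite_lists_length_eq[of "UNIV :: bool set" n] by simp

lemma cube_nonempty: "cube n \<noteq> {}"
  unfolding cube_def by (auto intro!: exI[of _ "replicate n True"])

lemma cube_card: "card (cube n) = 2 ^ n"
  unfolding cube_def using card_lists_length_eq[of "UNIV :: bool set" n] by simp

lemma cube_mean_bounds:
  assumes "\<forall>x\<in>cube n. 0 \<le> h x \<and> h x \<le> 1"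
  shows "0 \<le> cube_mean n h" "cube_mean n h \<le> 1"
proof -
  have "0 \<le> (\<Sum>x\<in>cube n. h x)" using assms by (intro sum_nonneg) auto
  then show "0 \<le> cube_mean n h" unfolding cube_mean_def by simp
  have "(\<Sum>x\<in>cube n. h x) \<le> (\<Sum>x\<in>cube n. 1)" using assms by (intro sum_mono) auto
  also have "\<dots> = 2 ^ n" using cube_card by simp
  finally show "cube_mean n h \<le> 1" unfolding cube_mean_def by simp
qed

definition Pm :: "nat \<Rightarrow> nat \<Rightarrow> (nat \<Rightarrow> bool list) pmf" where
  "Pm n m = Pi_pmf {..<m} [] (\<lambda>_. pmf_of_set (cube n))"

lemma samples_eq: "samples_pmf n m = map_pmf (\<lambda>g. map g [0..<m]) (Pm n m)"
proof -
  define B where "B = PiE_dflt {..<m} [] (\<lambda>_. cube n)"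
  have Pm: "Pm n m = pmf_of_set B" unfolding Pm_def B_def
    by (rule Pi_pmf_of_set) (auto simp: cube_finite cube_nonempty)
  have finB: "finite B" unfolding B_def by (intro finite_PiE_dflt) (auto simp: cube_finite)
  have neB: "B \<noteq> {}"
  proof -
    obtain c where "c \<in> cube n" using cube_nonempty by blast
    then have "(\<lambda>j. if j < m then c else []) \<in> B" by (auto simp: B_def PiE_dflt_def)
    then show ?thesis by blast
  qed
  have inj: "inj_on (\<lambda>g. map g [0..<m]) B"
  proof (rule inj_onI)
    fix g g' assume "g \<in> B" "g' \<in> B" and e: "map g [0..<m] = map g' [0..<m]"
    show "g = g'"
    proof
      fix j show "g j = g' j"
      proof (cases "j < m")
        case True
        then show ?thesis using arg_cong[OF e, of "\<lambda>xs. xs ! j"] by simp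
      next
        case False then show ?thesis using \<open>g \<in> B\<close> \<open>g' \<in> B\<close> by (auto simp: B_def PiE_dflt_def)
      qed
    qed
  qed
  have img: "(\<lambda>g. map g [0..<m]) ` B = {xs. length xs = m \<and> (\<forall>x\<in>set xs. x \<in> cube n)}"
  proof (intro equalityI subsetI)
    fix xs assume "xs \<in> (\<lambda>g. map g [0..<m]) ` B"
    then show "xs \<in> {xs. length xs = m \<and> (\<forall>x\<in>set xs. x \<in> cube n)}" by (auto simp: B_def PiE_dflt_def)
  next
    fix xs assume xs: "xs \<in> {xs. length xs = m \<and> (\<forall>x\<in>set xs. x \<in> cube n)}"
    define g where "g j = (if j < m then xs ! j else [])" for j
    have "g \<in> B" using xs by (auto simp: B_def PiE_dflt_def g_def)
    moreover have "map g [0..<m] = xs" using xs by (intro nth_equalityI) (auto simp: g_def)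
    ultimately show "xs \<in> (\<lambda>g. map g [0..<m]) ` B" by blast
  qed
  show ?thesis unfolding samples_pmf_def Pm map_pmf_of_set_inj[OF inj neB finB] img ..
qed

lemma hoeff:
  assumes h: "\<forall>x\<in>cube n. 0 \<le> h x \<and> h x \<le> 1" and m: "m > 0" and t: "t \<ge> 0"
  shows "measure_pmf.prob (Pm n m) {g. t \<le> \<bar>(\<Sum>j<m. h (g j)) - real m * cube_mean n h\<bar>}
           \<le> 2 * exp (-2 * t\<^sup>2 / real m)"
proof -
  have setP: "g \<in> set_pmf (Pm n m) \<Longrightarrow> j < m \<Longrightarrow> g j \<in> cube n" for g j
    unfolding Pm_def by (subst (asm) set_Pi_pmf) (auto simp: PiE_dflt_def set_pmf_of_set cube_finite cube_nonempty)
  have indep: "prob_space.indep_vars (measure_pmf (Pm n m)) (\<lambda>_. borel) (\<lambda>j g. h (g j)) {..<m}"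
    using prob_space.indep_vars_compose2[OF measure_pmf.prob_space_axioms indep_vars_Pi_pmf[of "{..<m}" "[]" "\<lambda>_. pmf_of_set (cube n)"], of "\<lambda>_. h" "\<lambda>_. borel"]
    unfolding Pm_def by simp
  have ex: "measure_pmf.expectation (Pm n m) (\<lambda>g. h (g j)) = cube_mean n h" if j: "j < m" for j
  proof -
    have "measure_pmf.expectation (Pm n m) (\<lambda>g. h (g j)) = measure_pmf.expectation (map_pmf (\<lambda>g. g j) (Pm n m)) h"
      by simp
    also have "map_pmf (\<lambda>g. g j) (Pm n m) = pmf_of_set (cube n)"
      unfolding Pm_def using j by (subst Pi_pmf_component) auto
    also have "measure_pmf.expectation (pmf_of_set (cube n)) h = (\<Sum>x\<in>cube n. h x) / card (cube n)"
      by (rule integral_pmf_of_set) (auto simp: cube_finite cube_nonempty)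
    finally show ?thesis by (simp add: cube_mean_def cube_card)
  qed
  interpret H: Hoeffding_ineq "measure_pmf (Pm n m)" "{..<m}" "\<lambda>j g. h (g j)" "\<lambda>_. 0" "\<lambda>_. 1"
    "\<Sum>j<m. measure_pmf.expectation (Pm n m) (\<lambda>g. h (g j))"
  proof unfold_locales
    show "finite {..<m}" by simp
    show "prob_space.indep_vars (measure_pmf (Pm n m)) (\<lambda>_. borel) (\<lambda>j g. h (g j)) {..<m}" by (rule indep)
    fix j assume "j \<in> {..<m}"
    then show "AE x in measure_pmf (Pm n m). h (x j) \<in> {0..1}"
      using setP h by (intro AE_pmfI) auto
  qed simp
  have mu: "(\<Sum>j<m. measure_pmf.expectation (Pm n m) (\<lambda>g. h (g j))) = real m * cube_mean n h"
    using ex by simp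
  have "measure_pmf.prob (Pm n m) {g \<in> space (measure_pmf (Pm n m)). t \<le> \<bar>(\<Sum>j<m. h (g j)) - (\<Sum>j<m. measure_pmf.expectation (Pm n m) (\<lambda>g. h (g j)))\<bar>}
         \<le> 2 * exp (- 2 * t\<^sup>2 / (\<Sum>j<m. (1 - 0)\<^sup>2))"
    by (rule H.Hoeffding_ineq_abs_ge[OF t]) (use m in simp)
  then show ?thesis unfolding mu by simp
qed

lemma d_max_le:
  assumes "length a = length v" "\<forall>i<length a. \<bar>a ! i - v ! i\<bar> \<le> e" "e \<ge> 0"
  shows "d_max a v \<le> e"
proof -
  have fin: "finite {\<bar>a ! i - v ! i\<bar> | i. i < length a}"
    using finite_image_set[of "\<lambda>i. i < length a" "\<lambda>i. \<bar>a ! i - v ! i\<bar>"] by simp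
  show ?thesis unfolding d_max_def using assms fin by (subst Max_le_iff) auto
qed

lemma ln2_ge: "ln (2::real) \<ge> 1/2"
proof -
  have "ln (1/2::real) \<le> 1/2 - 1" by (rule ln_le_minus_one) simp
  then show ?thesis by (simp add: ln_div)
qed

theorem mainTheorem7:
  "\<exists>C::real. C > 0 \<and>
    (\<forall>(n::nat) (d::nat) (eps::real) (delta::real).
       d \<ge> 1 \<and> eps > 0 \<and> 0 < delta \<and> delta < 1/2 \<longrightarrow>
       (\<exists>(m::nat) A.
          real m \<le> C * ((real d + 1)^2 / eps^2 * ln (real d / delta)) \<and>
          (\<forall>f :: nat \<Rightarrow> bool list \<Rightarrow> real.
             (\<forall>i<d. \<forall>x\<in>cube n. 0 \<le> f i x \<and> f i x \<le> 1) \<longrightarrow>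
             pseudodet_approx (d + 1) eps delta (run_alg n d m A f)
               (map (\<lambda>i. cube_mean n (f i)) [0..<d]))))"
proof (rule exI[of _ 65], intro conjI allI impI)
  fix n d :: nat and eps delta :: real
  assume as: "d \<ge> 1 \<and> eps > 0 \<and> 0 < delta \<and> delta < 1/2"
  then have d1: "d \<ge> 1" and ep: "eps > 0" and dl: "0 < delta" "delta < 1/2" by auto
  have two: "2 \<le> real d / delta" using d1 dl by (simp add: field_simps)
  have ln2: "ln 2 \<le> ln (real d / delta)" using two by simp
  have lnpos: "ln (real d / delta) > 0" using ln2 ln2_ge by linarith
  define X where "X = (real d + 1)^2 / eps^2 * ln (real d / delta)"
  have Xpos: "X > 0" unfolding X_def using lnpos ep by simp
  show "\<exists>m A. real m \<le> 65 * ((real d + 1)^2 / eps^2 * ln (real d / delta)) \<and>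
          (\<forall>f :: nat \<Rightarrow> bool list \<Rightarrow> real.
             (\<forall>i<d. \<forall>x\<in>cube n. 0 \<le> f i x \<and> f i x \<le> 1) \<longrightarrow>
             pseudodet_approx (d + 1) eps delta (run_alg n d m A f)
               (map (\<lambda>i. cube_mean n (f i)) [0..<d]))"
  proof (cases "eps \<ge> 1")
    case True
    define r where "r = replicate d (0::real)"
    show ?thesis
    proof (intro exI[of _ 0] exI[of _ "\<lambda>_. return_pmf r"] conjI allI impI)
      show "real 0 \<le> 65 * ((real d + 1)^2 / eps^2 * ln (real d / delta))" using Xpos X_def by simp
      fix f :: "nat \<Rightarrow> bool list \<Rightarrow> real"
      assume f: "\<forall>i<d. \<forall>x\<in>cube n. 0 \<le> f i x \<and> f i x \<le> 1"
      define v where "v = map (\<lambda>i. cube_mean n (f i)) [0..<d]"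
      have run: "run_alg n d 0 (\<lambda>_. return_pmf r) f = return_pmf r" by (simp add: run_alg_def)
      have "d_max r v \<le> eps"
      proof (rule d_max_le)
        show "length r = length v" by (simp add: r_def v_def)
        show "\<forall>i<length r. \<bar>r ! i - v ! i\<bar> \<le> eps"
        proof (intro allI impI)
          fix i assume "i < length r"
          then have i: "i < d" by (simp add: r_def)
          have "0 \<le> cube_mean n (f i)" "cube_mean n (f i) \<le> 1" using cube_mean_bounds[of n "f i"] f i by auto
          then show "\<bar>r ! i - v ! i\<bar> \<le> eps" using i True by (simp add: r_def v_def)
        qed
        show "eps \<ge> 0" using ep by simp
      qed
      then have "r \<in> {a. a \<in> {r} \<and> length a = length v \<and> d_max a v \<le> eps}" by (simp add: r_def v_def)
      then have "measure_pmf.prob (return_pmf r) {a. a \<in> {r} \<and> length a = length v \<and> d_max a v \<le> eps} = 1"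
        by simp
      then show "pseudodet_approx (d + 1) eps delta (run_alg n d 0 (\<lambda>_. return_pmf r) f) v"
        unfolding pseudodet_approx_def run using dl by (intro exI[of _ "{r}"]) auto
    qed
  next
    case False
    then have e1: "eps < 1" by simp
    define \<eta> where "\<eta> = eps / (8 * (real d + 1))"
    define L where "L = eps"
    define y where "y = ln (2 * real d / delta) / (2 * \<eta>^2)"
    define m where "m = nat \<lceil>y\<rceil>"
    have etapos: "\<eta> > 0" unfolding \<eta>_def using ep by simp
    have lny: "ln (2 * real d / delta) = ln 2 + ln (real d / delta)"
    proof -
      have "2 * real d / delta = 2 * (real d / delta)" by simp
      moreover have "real d / delta > 0" using d1 dl by simp
      ultimately show ?thesis using ln_mult[of 2 "real d / delta"] d1 dl by simp
    qed
    have ypos: "y > 0" unfolding y_def lny using lnpos ln2_ge etapos by simp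
    have my: "y \<le> real m" "real m \<le> y + 1" unfolding m_def using ypos by linarith+
    have mpos: "m > 0" using my ypos by linarith
    have y_eq: "y = 32 * ((real d + 1)^2 / eps^2) * ln (2 * real d / delta)"
      unfolding y_def \<eta>_def using ep by (simp add: field_simps power2_eq_square)
    have X1: "1 \<le> X"
    proof -
      have "(real d + 1)^2 \<ge> 4" 
      proof -
        have "(2::real) \<le> real d + 1" using d1 by simp
        then have "(2::real)^2 \<le> (real d + 1)^2" by (rule power_mono) simp
        then show ?thesis by simp
      qed
      moreover have "eps^2 \<le> 1" using ep e1 by (simp add: power_le_one)
      ultimately have "(real d + 1)^2 / eps^2 \<ge> 4" using ep by (simp add: field_simps)
      moreover have "ln (real d / delta) \<ge> 1/2" using ln2 ln2_ge by linarith
      ultimately have "(real d + 1)^2 / eps^2 * ln (real d / delta) \<ge> 4 * (1/2)"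
        by (intro mult_mono) auto
      then show ?thesis unfolding X_def by simp
    qed
    have mbound: "real m \<le> 65 * X"
    proof -
      have "ln (2 * real d / delta) \<le> 2 * ln (real d / delta)" using lny ln2 by simp
      then have "y \<le> 32 * ((real d + 1)^2 / eps^2) * (2 * ln (real d / delta))"
        unfolding y_eq using ep by (intro mult_left_mono) auto
      then have "y \<le> 64 * X" unfolding X_def by simp
      then show ?thesis using my X1 by linarith
    qed
    define U where "U ys i = sum_list (map (\<lambda>p. snd p ! i) ys) / real m" for ys :: "(bool list \<times> real list) list" and i
    define A where "A ys = return_pmf (Out \<eta> L d (U ys))" for ys
    show ?thesis
    proof (intro exI[of _ m] exI[of _ A] conjI allI impI)
      show "real m \<le> 65 * ((real d + 1)^2 / eps^2 * ln (real d / delta))" using mbound X_def by simp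
      fix f :: "nat \<Rightarrow> bool list \<Rightarrow> real"
      assume f: "\<forall>i<d. \<forall>x\<in>cube n. 0 \<le> f i x \<and> f i x \<le> 1"
      define vl where "vl = map (\<lambda>i. cube_mean n (f i)) [0..<d]"
      define v where "v i = cube_mean n (f i)" for i
      define F where "F g = Out \<eta> L d (U (map (\<lambda>x. (x, map (\<lambda>i. f i x) [0..<d])) (map g [0..<m])))" for g
      have run: "run_alg n d m A f = map_pmf F (Pm n m)"
        unfolding run_alg_def samples_eq A_def F_def by (simp add: map_pmf_def bind_assoc_pmf bind_return_pmf)
      have Ug: "U (map (\<lambda>x. (x, map (\<lambda>i. f i x) [0..<d])) (map g [0..<m])) i = (\<Sum>j<m. f i (g j)) / real m"
        if i: "i < d" for g i
      proof -
        have e1: "map (\<lambda>p. snd p ! i) (map (\<lambda>x. (x, map (\<lambda>i. f i x) [0..<d])) (map g [0..<m])) = map (\<lambda>j. f i (g j)) [0..<m]"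
          using i by simp
        have e2: "sum_list (map (\<lambda>j. f i (g j)) [0..<m]) = (\<Sum>j<m. f i (g j))"
          using sum_set_upt_conv_sum_list_nat[of "\<lambda>j. f i (g j)" 0 m] by (simp add: atLeast0LessThan)
        show ?thesis unfolding U_def e1 e2 ..
      qed
      define S where "S = (\<lambda>k. map (\<lambda>i. rnd L d k (v i)) [0..<d]) ` {..d}"
      have finS: "finite S" unfolding S_def by simp
      have "card S \<le> card {..d}" unfolding S_def by (rule card_image_le) simp
      then have cardS: "card S \<le> d + 1" by simp
      define T where "T = {a. a \<in> S \<and> length a = length vl \<and> d_max a vl \<le> eps}"
      have ST: "S \<subseteq> T"
      proof
        fix a assume "a \<in> S"
        then obtain k where a: "a = map (\<lambda>i. rnd L d k (v i)) [0..<d]" unfolding S_def by blast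
        have "d_max a vl \<le> eps"
        proof (rule d_max_le)
          show "length a = length vl" by (simp add: a vl_def)
          show "\<forall>i<length a. \<bar>a ! i - vl ! i\<bar> \<le> eps"
          proof (intro allI impI)
            fix i assume "i < length a"
            then have i: "i < d" by (simp add: a)
            have L0: "L > 0" using ep L_def by simp
            have "rnd L d k (v i) \<le> v i" "v i - L < rnd L d k (v i)" using rnd_close[OF L0] by auto
            then show "\<bar>a ! i - vl ! i\<bar> \<le> eps" using i by (simp add: a vl_def v_def L_def)
          qed
          show "eps \<ge> 0" using ep by simp
        qed
        then show "a \<in> T" using \<open>a \<in> S\<close> by (simp add: T_def a vl_def)
      qed
      define G where "G = {g. \<forall>i<d. \<bar>(\<Sum>j<m. f i (g j)) - real m * v i\<bar> < real m * \<eta>}"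
      have GT: "G \<subseteq> F -` T"
      proof
        fix g assume g: "g \<in> G"
        have "\<forall>i<d. \<bar>U (map (\<lambda>x. (x, map (\<lambda>i. f i x) [0..<d])) (map g [0..<m])) i - v i\<bar> \<le> \<eta>"
        proof (intro allI impI)
          fix i assume i: "i < d"
          define Sg where "Sg = (\<Sum>j<m. f i (g j))"
          have mp: "real m > 0" using mpos by simp
          have lt: "\<bar>Sg - real m * v i\<bar> < real m * \<eta>" using g i unfolding G_def Sg_def by blast
          have "Sg / real m - v i = (Sg - real m * v i) / real m" using mp by (simp add: diff_divide_distrib)
          then have "\<bar>Sg / real m - v i\<bar> = \<bar>Sg - real m * v i\<bar> / real m" using mp by (simp add: abs_divide)
          also have "\<dots> < \<eta>" using lt mp by (simp add: pos_divide_less_eq mult.commute)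
          finally have "\<bar>(\<Sum>j<m. f i (g j)) / real m - v i\<bar> < \<eta>" unfolding Sg_def .
          then have "\<bar>(\<Sum>j<m. f i (g j)) / real m - v i\<bar> \<le> \<eta>" by simp
          then show "\<bar>U (map (\<lambda>x. (x, map (\<lambda>i. f i x) [0..<d])) (map g [0..<m])) i - v i\<bar> \<le> \<eta>" using Ug[OF i] by simp
        qed
        moreover have L0: "L > 0" using ep L_def by simp
        moreover have small: "6 * \<eta> * (real d + 1) \<le> L" unfolding \<eta>_def L_def using ep by (simp add: field_simps)
        ultimately have "F g \<in> S" unfolding F_def S_def by (intro Out_in etapos) auto
        then show "g \<in> F -` T" using ST by auto
      qed
      define B where "B i = {g. real m * \<eta> \<le> \<bar>(\<Sum>j<m. f i (g j)) - real m * v i\<bar>}" for i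
      have compl: "UNIV - G = (\<Union>i<d. B i)" by (auto simp: G_def B_def not_less)
      have PB: "measure_pmf.prob (Pm n m) (B i) \<le> delta / real d" if i: "i < d" for i
      proof -
        have "measure_pmf.prob (Pm n m) (B i) \<le> 2 * exp (-2 * (real m * \<eta>)\<^sup>2 / real m)"
          unfolding B_def v_def by (rule hoeff) (use f i mpos etapos in auto)
        also have "-2 * (real m * \<eta>)\<^sup>2 / real m = - (real m * (2 * \<eta>^2))"
          using mpos by (simp add: power2_eq_square field_simps)
        also have "exp (- (real m * (2 * \<eta>^2))) \<le> exp (- ln (2 * real d / delta))"
        proof -
          have "ln (2 * real d / delta) \<le> real m * (2 * \<eta>^2)"
            using my(1) etapos unfolding y_def by (simp add: field_simps)
          then show ?thesis by simp
        qed
        also have "exp (- ln (2 * real d / delta)) = delta / (2 * real d)"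
          using d1 dl by (simp add: exp_minus)
        finally show ?thesis by simp
      qed
      have "measure_pmf.prob (Pm n m) (UNIV - G) \<le> (\<Sum>i<d. measure_pmf.prob (Pm n m) (B i))"
        unfolding compl by (rule measure_pmf.finite_measure_subadditive_finite) auto
      also have "\<dots> \<le> (\<Sum>i<d. delta / real d)" by (intro sum_mono PB) auto
      also have "\<dots> = delta" using d1 by simp
      finally have "measure_pmf.prob (Pm n m) (UNIV - G) \<le> delta" .
      then have "measure_pmf.prob (Pm n m) G \<ge> 1 - delta"
        using measure_pmf.prob_compl[of G "Pm n m"] by simp
      also have "measure_pmf.prob (Pm n m) G \<le> measure_pmf.prob (Pm n m) (F -` T)"
        by (intro measure_pmf.finite_measure_mono GT) auto
      finally have "measure_pmf.prob (run_alg n d m A f) T \<ge> 1 - delta" unfolding run by simp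
      then show "pseudodet_approx (d + 1) eps delta (run_alg n d m A f) vl"
        unfolding pseudodet_approx_def T_def using finS cardS by blast
    qed
  qed
qed simp

end
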